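(* Let $p,q$ be positive integers with $1<q<p-q$ and $\gcd(p,q)=1$, let $A=\langle q,p-q\rangle\subseteq\mathbb{Z}^+$, let $s\in A\setminus\{0\}$, and let $r$ be a positive integer with $1<r<s-r$ and $\gcd(r,s)=1$; put $B=\langle r,s-r\rangle$. Let $M$ be the submonoid of $\mathbb{Q}^+$ generated by all fractions $k/r$ with $k\in A$ and all fractions $\frac{k'}{r}\left(\frac{s}{r}\right)^n$ with $k'\in B$ and $n\ge 1$, and let $G=M+(-M)$ with positive cone $G^+=M$. For $n\ge1$ let $e_n=(s/r)^n$. Then the set $D=\{x\in G^+ : x\le_G e_n \text{ for some } n\}$ is an interval in $G^+$, $D\neq G^+$, and $rD=G^+$.
   Context: $\langle a_1,\dots,a_k\rangle$ denotes the submonoid of $\mathbb{Z}^+$ generated by $a_1,\dots,a_k$. For a partially ordered abelian group $(G,G^+)$, $x\le_G y$ means $y-x\in G^+$. An interval in $G^+$ is a nonempty subset $X\subseteq G^+$ which is upward directed (any two elements have a common upper bound in $X$) and order-hereditary ($0\le y\le x\in X$ implies $y\in X$). The sum of intervals is $X+Y=\{z\in G^+: z\le x+y\text{ for some }x\in X,y\in Y\}$, and for a positive integer $t$, $tX$ denotes the $t$-fold sum $X+\cdots+X$. *)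

theory Defs
  imports Complex_Main
begin

inductive_set gen_monoid :: "'a::comm_monoid_add set \<Rightarrow> 'a set" for S where
  zero: "0 \<in> gen_monoid S"
| gen: "x \<in> S \<Longrightarrow> x \<in> gen_monoid S"
| add: "x \<in> gen_monoid S \<Longrightarrow> y \<in> gen_monoid S \<Longrightarrow> x + y \<in> gen_monoid S"

definition le_G :: "rat set \<Rightarrow> rat \<Rightarrow> rat \<Rightarrow> bool" where
  "le_G P x y \<longleftrightarrow> y - x \<in> P"

definition is_interval :: "rat set \<Rightarrow> rat set \<Rightarrow> bool" where
  "is_interval P X \<longleftrightarrow> X \<noteq> {} \<and> X \<subseteq> P
     \<and> (\<forall>x\<in>X. \<forall>y\<in>X. \<exists>z\<in>X. le_G P x z \<and> le_G P y z)
     \<and> (\<forall>x\<in>X. \<forall>y. le_G P 0 y \<and> le_G P y x \<longrightarrow> y \<in> X)"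

definition isum :: "rat set \<Rightarrow> rat set \<Rightarrow> rat set \<Rightarrow> rat set" where
  "isum P X Y = {z \<in> P. \<exists>x\<in>X. \<exists>y\<in>Y. le_G P z (x + y)}"

(* t-fold sum t X = X + ... + X (meaningful for t >= 1) *)
fun imul :: "rat set \<Rightarrow> nat \<Rightarrow> rat set \<Rightarrow> rat set" where
  "imul P 0 X = {0}"
| "imul P (Suc 0) X = X"
| "imul P (Suc (Suc n)) X = isum P X (imul P (Suc n) X)"

end

theory Submission
  imports Defs
begin

lemma gm2_form: "(x::nat) \<in> gen_monoid {a, b} \<Longrightarrow> \<exists>i j. x = i*a + j*b"
proof (induction rule: gen_monoid.induct)
  case zero then show ?case by auto
next
  case (gen x) then show ?case by (auto intro: exI[of _ 1] exI[of _ 0])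
next
  case (add x y)
  then obtain i j i' j' where "x = i*a+j*b" "y = i'*a+j'*b" by blast
  then show ?case by (intro exI[of _ "i+i'"] exI[of _ "j+j'"]) (simp add: algebra_simps)
qed

lemma gm_mult: "x \<in> gen_monoid S \<Longrightarrow> of_nat c * x \<in> gen_monoid S"
  by (induction c) (auto simp: algebra_simps intro: gen_monoid.intros)

lemma gm_mult_nat: "(x::nat) \<in> gen_monoid S \<Longrightarrow> c * x \<in> gen_monoid S"
  using gm_mult[of x S c] by simp

fun Lv :: "nat set \<Rightarrow> nat set \<Rightarrow> nat \<Rightarrow> nat \<Rightarrow> nat \<Rightarrow> nat \<Rightarrow> bool" where
  "Lv A B r s 0 T = (T \<in> A)"
| "Lv A B r s (Suc K) T = (\<exists>T' b. Lv A B r s K T' \<and> b \<in> B \<and> T = r*T' + b*s^(Suc K))"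

lemma Lv_zero: "0 \<in> A \<Longrightarrow> 0 \<in> B \<Longrightarrow> Lv A B r s K 0"
  by (induction K) auto

lemma Lv_lift1: assumes "0 \<in> B" "Lv A B r s K T" shows "Lv A B r s (Suc K) (r*T)"
proof -
  have "r*T = r*T + 0*s^(Suc K)" by simp
  then show ?thesis using assms unfolding Lv.simps(2) by blast
qed

lemma Lv_lift: "0 \<in> B \<Longrightarrow> Lv A B r s K T \<Longrightarrow> Lv A B r s (K+j) (r^j*T)"
proof (induction j)
  case 0 then show ?case by simp
next
  case (Suc j)
  then have "Lv A B r s (Suc (K+j)) (r*(r^j*T))" using Lv_lift1 by blast
  then show ?case by (simp add: mult.assoc)
qed

lemma Lv_add:
  assumes "\<And>x y. x \<in> A \<Longrightarrow> y \<in> A \<Longrightarrow> x + y \<in> A" "\<And>x y. x \<in> B \<Longrightarrow> y \<in> B \<Longrightarrow> x + y \<in> B"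
  shows "Lv A B r s K T1 \<Longrightarrow> Lv A B r s K T2 \<Longrightarrow> Lv A B r s K (T1+T2)"
proof (induction K arbitrary: T1 T2)
  case 0 then show ?case using assms by simp
next
  case (Suc K)
  from Suc.prems obtain T1' b1 T2' b2 where h: "Lv A B r s K T1'" "b1 \<in> B" "T1 = r*T1' + b1*s^(Suc K)"
    "Lv A B r s K T2'" "b2 \<in> B" "T2 = r*T2' + b2*s^(Suc K)" by auto
  then have "Lv A B r s K (T1'+T2')" using Suc.IH by blast
  moreover have "b1 + b2 \<in> B" using h assms by blast
  moreover have "T1 + T2 = r*(T1'+T2') + (b1+b2)*s^(Suc K)" using h by (simp add: algebra_simps)
  ultimately show ?case by auto
qed

lemma Lv_desc1:
  assumes cop: "coprime r s" and r0: "r > 0" and sA: "s \<in> A" and sB: "s \<in> B"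
    and A: "\<And>x y. x \<in> A \<Longrightarrow> y \<in> A \<Longrightarrow> x + y \<in> A" "\<And>x y. x \<in> B \<Longrightarrow> y \<in> B \<Longrightarrow> x + y \<in> B"
    and mA: "\<And>x c. x \<in> A \<Longrightarrow> c*x \<in> A" and mB: "\<And>x c. x \<in> B \<Longrightarrow> c*x \<in> B"
    and L: "Lv A B r s (Suc K) T" and d: "r dvd T"
  shows "Lv A B r s K (T div r)"
proof -
  from L obtain T' b where h: "Lv A B r s K T'" "b \<in> B" "T = r*T' + b*s^(Suc K)" by auto
  have "r dvd b*s^(Suc K)" using d h(3) by (simp add: dvd_add_right_iff)
  moreover have "coprime r (s^(Suc K))" using cop by simp
  ultimately have "r dvd b" using coprime_dvd_mult_left_iff by blast
  then obtain c where c: "b = r*c" by blast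
  have Td: "T div r = T' + (c*s)*s^K" using h(3) c r0 by (simp add: algebra_simps)
  show ?thesis
  proof (cases K)
    case 0
    then show ?thesis using Td h(1) A(1) mA[OF sA] by simp
  next
    case (Suc K0)
    with h(1) obtain T'' b' where h2: "Lv A B r s K0 T''" "b' \<in> B" "T' = r*T'' + b'*s^K" by auto
    have "T div r = r*T'' + (b' + c*s)*s^K" using Td h2(3) by (simp add: algebra_simps)
    moreover have "b' + c*s \<in> B" using h2(2) A(2) mB[OF sB] by blast
    ultimately show ?thesis using Suc h2(1) by auto
  qed
qed

lemma Lv_desc:
  assumes cop: "coprime r s" and r0: "r > 0" and sA: "s \<in> A" and sB: "s \<in> B"
    and A: "\<And>x y. x \<in> A \<Longrightarrow> y \<in> A \<Longrightarrow> x + y \<in> A" "\<And>x y. x \<in> B \<Longrightarrow> y \<in> B \<Longrightarrow> x + y \<in> B"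
    and mA: "\<And>x c. x \<in> A \<Longrightarrow> c*x \<in> A" and mB: "\<And>x c. x \<in> B \<Longrightarrow> c*x \<in> B"
  shows "Lv A B r s (K+d) (r^d*X) \<Longrightarrow> Lv A B r s K X"
proof (induction d)
  case 0 then show ?case by simp
next
  case (Suc d)
  have "Lv A B r s (Suc (K+d)) (r^(Suc d)*X)" using Suc.prems by simp
  moreover have "r dvd r^(Suc d)*X" by simp
  ultimately have "Lv A B r s (K+d) (r^(Suc d)*X div r)"
    using Lv_desc1[OF cop r0 sA sB A(1) A(2) mA mB] by blast
  moreover have "r^(Suc d)*X div r = r^d*X" using r0 by simp
  ultimately show ?case using Suc.IH by simp
qed

lemma Lv_bound:
  assumes cop: "coprime r s" and r1: "r > 1" and rs: "r \<le> s"
    and Bf: "\<And>x. x \<in> B \<Longrightarrow> \<exists>i j. x = i*r + j*(s-r)"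
  shows "Lv A B r s m X \<Longrightarrow> X + a*r^m = s^(Suc m) \<Longrightarrow> a \<ge> 1 \<Longrightarrow> a \<le> s"
proof (induction m arbitrary: X)
  case 0 then show ?case by simp
next
  case (Suc m)
  from Suc.prems(1) obtain T' b where h: "Lv A B r s m T'" "b \<in> B" "X = r*T' + b*s^(Suc m)" by auto
  have eq: "r*T' + b*s^(Suc m) + a*r^(Suc m) = s*s^(Suc m)" using Suc.prems(2) h(3) by simp
  have s0: "s > 0" using r1 rs by simp
  have "b*s^(Suc m) \<le> s*s^(Suc m)" using eq by linarith
  then have bs: "b \<le> s" using s0 by simp
  have "s*s^(Suc m) - b*s^(Suc m) = r*(T' + a*r^m)" using eq by (simp add: algebra_simps)
  then have "s^(Suc m)*(s-b) = r*(T' + a*r^m)" by (simp add: algebra_simps diff_mult_distrib)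
  then have "r dvd s^(Suc m)*(s-b)" by (metis dvd_triv_left)
  moreover have "coprime r (s^(Suc m))" using cop by simp
  ultimately have dv: "r dvd (s-b)" using coprime_dvd_mult_right_iff by blast
  have "b \<noteq> s"
  proof
    assume "b = s"
    then have "a*r^(Suc m) = 0" using eq by simp
    then show False using Suc.prems(3) r1 by simp
  qed
  then have "s - b \<ge> r" using dv bs by (metis diff_is_0_eq dvd_imp_le le_antisym neq0_conv)
  then have b1: "b \<le> s - r" using bs by linarith
  obtain i j where ij: "b = i*r + j*(s-r)" using Bf h(2) by blast
  have "j \<noteq> 0"
  proof
    assume "j = 0"
    then have "r dvd b" using ij by simp
    then have "r dvd b + (s - b)" using dv by (rule dvd_add)
    then have "r dvd s" using bs by simp
    then have "r dvd gcd r s" by simp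
    then show False using cop r1 by (simp add: coprime_iff_gcd_eq_1)
  qed
  then have "1*(s-r) \<le> j*(s-r)" by (intro mult_le_mono1) simp
  then have "b \<ge> s - r" using ij by (simp only: mult_1)
  then have bb: "b = s - r" using b1 by simp
  have "r*T' + (s-r)*s^(Suc m) + a*r^(Suc m) = (r + (s-r))*s^(Suc m)" using eq bb rs by simp
  then have "r*T' + a*r^(Suc m) = r*s^(Suc m)" by (simp add: algebra_simps)
  then have "r*(T' + a*r^m) = r*s^(Suc m)" by (simp add: algebra_simps)
  then have "T' + a*r^m = s^(Suc m)" using r1 by simp
  then show ?case using Suc.IH h(1) Suc.prems(3) by blast
qed
locale L22 =
  fixes p q r s :: nat and A B :: "nat set" and M D :: "rat set"
  assumes a1: "0 < p" "0 < q" "1 < q" "q < p - q" "gcd p q = 1"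
    and hA: "A = gen_monoid {q, p - q}"
    and sA: "s \<in> A" and s0: "s \<noteq> 0"
    and r0: "0 < r" and r1: "1 < r" and rs: "r < s - r" and g: "gcd r s = 1"
    and hB: "B = gen_monoid {r, s - r}"
    and hM: "M = gen_monoid ({of_nat k / of_nat r | k. k \<in> A}
            \<union> {of_nat k' / of_nat r * (of_nat s / of_nat r) ^ n | k' n. k' \<in> B \<and> n \<ge> 1})"
    and hD: "D = {x \<in> M. \<exists>n\<ge>1. le_G M x ((of_nat s / of_nat r) ^ n)}"
begin

definition e :: "nat \<Rightarrow> rat" where "e n = (of_nat s / of_nat r) ^ n"

lemma rle: "r \<le> s" "2*r < s" using rs by auto

lemma cop: "coprime r s" using g by (simp add: coprime_iff_gcd_eq_1)

lemma A0: "0 \<in> A" and Aadd: "\<And>x y. x \<in> A \<Longrightarrow> y \<in> A \<Longrightarrow> x + y \<in> A"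
  and Amul: "\<And>x c. x \<in> A \<Longrightarrow> c*x \<in> A"
  unfolding hA by (auto intro: gen_monoid.intros gm_mult_nat)

lemma B0: "0 \<in> B" and Badd: "\<And>x y. x \<in> B \<Longrightarrow> y \<in> B \<Longrightarrow> x + y \<in> B"
  and Bmul: "\<And>x c. x \<in> B \<Longrightarrow> c*x \<in> B" and Br: "r \<in> B" and Bsr: "s - r \<in> B"
  and Bf: "\<And>x. x \<in> B \<Longrightarrow> \<exists>i j. x = i*r + j*(s-r)"
  unfolding hB by (auto intro: gen_monoid.intros gm_mult_nat gm2_form)

lemma sB: "s \<in> B"
proof -
  have "r + (s - r) \<in> B" using Badd Br Bsr by blast
  then show ?thesis using rle by simp
qed

lemma M0: "0 \<in> M" and Madd: "\<And>x y. x \<in> M \<Longrightarrow> y \<in> M \<Longrightarrow> x + y \<in> M"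
  and Mmul: "\<And>x c. x \<in> M \<Longrightarrow> of_nat c * x \<in> M"
  unfolding hM by (auto intro: gen_monoid.intros gm_mult)

lemma genA: "k \<in> A \<Longrightarrow> of_nat k / of_nat r \<in> M"
  unfolding hM by (rule gen_monoid.gen) blast

lemma genB: "k \<in> B \<Longrightarrow> n \<ge> 1 \<Longrightarrow> of_nat k / of_nat r * e n \<in> M"
  unfolding hM e_def by (rule gen_monoid.gen) blast

lemma e_in: "n \<ge> 1 \<Longrightarrow> e n \<in> M"
  using genB[OF Br, of n] r0 by simp

lemma ce: "n \<ge> 1 \<Longrightarrow> of_nat c * e n \<in> M"
  using e_in Mmul by blast

lemma e_Suc: "e (Suc n) = of_nat s / of_nat r * e n" unfolding e_def by simp

lemma estep: "n \<ge> 1 \<Longrightarrow> e (Suc n) - e n \<in> M"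
proof -
  assume n: "n \<ge> 1"
  have "e (Suc n) - e n = of_nat (s - r) / of_nat r * e n"
    using r0 rle by (simp add: e_Suc of_nat_diff field_simps)
  then show ?thesis using genB[OF Bsr n] by simp
qed

lemma mono: assumes "1 \<le> n" "n \<le> N" shows "e N - e n \<in> M"
  using assms(2)
proof (induction N rule: dec_induct)
  case base then show ?case using M0 by simp
next
  case (step m)
  have "e (Suc m) - e n = (e (Suc m) - e m) + (e m - e n)" by simp
  moreover have "e (Suc m) - e m \<in> M" using step assms(1) estep[of m] by simp
  ultimately show ?case using step Madd by metis
qed

lemma double: "n \<ge> 1 \<Longrightarrow> of_nat r * e (Suc n) - 2 * (of_nat r * e n) \<in> M"
proof -
  assume n: "n \<ge> 1"
  have "of_nat r * e (Suc n) - 2 * (of_nat r * e n) = of_nat (s - 2*r) * e n"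
    using r0 rle by (simp add: e_Suc of_nat_diff field_simps)
  then show ?thesis using ce[OF n] by simp
qed

lemma rep_lift: "Lv A B r s K T \<Longrightarrow> K \<le> K' \<Longrightarrow>
   \<exists>T'. Lv A B r s K' T' \<and> (of_nat T' / of_nat r ^ Suc K' :: rat) = of_nat T / of_nat r ^ Suc K"
proof -
  assume L: "Lv A B r s K T" and KK: "K \<le> K'"
  define j where "j = K' - K"
  have K': "K' = K + j" using KK j_def by simp
  have "Lv A B r s K' (r^j*T)" using Lv_lift[OF B0 L] K' by simp
  moreover have "(of_nat (r^j*T) / of_nat r ^ Suc K' :: rat) = of_nat T / of_nat r ^ Suc K"
  proof -
    have "(of_nat r ^ Suc K' :: rat) = of_nat r ^ j * of_nat r ^ Suc K" using K' by (simp add: power_add)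
    moreover have "(of_nat r ^ j :: rat) \<noteq> 0" using r0 by simp
    ultimately show ?thesis by (simp del: power_Suc)
  qed
  ultimately show ?thesis by blast
qed

lemma M_rep: "x \<in> M \<Longrightarrow> \<exists>K T. Lv A B r s K T \<and> x = of_nat T / of_nat r ^ Suc K"
proof -
  assume "x \<in> M"
  then have "x \<in> gen_monoid ({of_nat k / of_nat r | k. k \<in> A}
            \<union> {of_nat k' / of_nat r * (of_nat s / of_nat r) ^ n | k' n. k' \<in> B \<and> n \<ge> 1})" using hM by simp
  then show ?thesis
  proof (induction rule: gen_monoid.induct)
    case zero
    have "Lv A B r s 0 0" using A0 by simp
    then have "Lv A B r s 0 0 \<and> (0::rat) = of_nat 0 / of_nat r ^ Suc 0" by simp
    then show ?case by blast
  next
    case (gen x)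
    then show ?case
    proof
      assume "x \<in> {of_nat k / of_nat r | k. k \<in> A}"
      then obtain k where "k \<in> A" "x = of_nat k / of_nat r" by blast
      then have "Lv A B r s 0 k \<and> x = of_nat k / of_nat r ^ Suc 0" by simp
      then show ?case by blast
    next
      assume "x \<in> {of_nat k' / of_nat r * (of_nat s / of_nat r) ^ n | k' n. k' \<in> B \<and> n \<ge> 1}"
      then obtain k n where kn: "k \<in> B" "n \<ge> 1" "x = of_nat k / of_nat r * (of_nat s / of_nat r) ^ n" by blast
      then obtain m where m: "n = Suc m" by (cases n) auto
      have "k*s^n = r*0 + k*s^(Suc m)" using m by simp
      then have "Lv A B r s n (k*s^n)" using m kn(1) Lv_zero[OF A0 B0, of r s m] unfolding m Lv.simps(2) by blast
      moreover have "x = of_nat (k*s^n) / of_nat r ^ Suc n" using kn(3) by (simp add: power_divide)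
      ultimately show ?case by blast
    qed
  next
    case (add x y)
    then obtain K1 T1 K2 T2 where h: "Lv A B r s K1 T1" "x = of_nat T1 / of_nat r ^ Suc K1"
      "Lv A B r s K2 T2" "y = of_nat T2 / of_nat r ^ Suc K2" by blast
    obtain T1' where h1: "Lv A B r s (max K1 K2) T1'" "(of_nat T1' / of_nat r ^ Suc (max K1 K2) :: rat) = of_nat T1 / of_nat r ^ Suc K1"
      using rep_lift[OF h(1), of "max K1 K2"] by auto
    obtain T2' where h2: "Lv A B r s (max K1 K2) T2'" "(of_nat T2' / of_nat r ^ Suc (max K1 K2) :: rat) = of_nat T2 / of_nat r ^ Suc K2"
      using rep_lift[OF h(3), of "max K1 K2"] by auto
    have "Lv A B r s (max K1 K2) (T1'+T2')" using Lv_add[OF Aadd Badd] h1(1) h2(1) by blast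
    moreover have "x + y = of_nat (T1'+T2') / of_nat r ^ Suc (max K1 K2)"
      using h h1(2) h2(2) by (simp add: add_divide_distrib)
    ultimately show ?case by blast
  qed
qed

lemma notD: "of_nat (2*s) / of_nat r \<notin> D"
proof
  assume "of_nat (2*s) / of_nat r \<in> D"
  then obtain n where n: "n \<ge> 1" "e n - of_nat (2*s) / of_nat r \<in> M"
    using hD by (auto simp: le_G_def e_def)
  then obtain K T where KT: "Lv A B r s K T" "e n - of_nat (2*s) / of_nat r = of_nat T / of_nat r ^ Suc K"
    using M_rep by blast
  obtain m where m: "n = Suc m" using n by (cases n) auto
  have rq: "(of_nat r :: rat) > 0" using r0 by simp
  have en: "e n = of_nat (s^n) / of_nat r ^ n" unfolding e_def by (simp add: power_divide)
  have "of_nat T = (e n - of_nat (2*s) / of_nat r) * of_nat r ^ Suc K" using KT(2) rq by simp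
  also have "\<dots> = (of_nat (s^n) - of_nat (2*s*r^m)) / of_nat r ^ n * of_nat r ^ Suc K"
    using rq m en by (simp add: field_simps)
  finally have "of_nat T * of_nat r ^ n = (of_nat (s^n) - of_nat (2*s*r^m)) * (of_nat r ^ Suc K :: rat)"
    using rq by simp
  then have eqi: "int T * int r ^ n = (int (s^n) - int (2*s*r^m)) * int r ^ Suc K"
    by (metis (mono_tags, opaque_lifting) of_int_eq_iff of_int_of_nat_eq of_int_diff of_int_mult of_int_power)
  have "0 \<le> int T * int r ^ n" by simp
  then have "0 \<le> (int (s^n) - int (2*s*r^m)) * int r ^ Suc K" using eqi by simp
  moreover have "(0::int) < int r ^ Suc K" using r0 by simp
  ultimately have "0 \<le> int (s^n) - int (2*s*r^m)" by (simp add: zero_le_mult_iff)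
  then have le: "2*s*r^m \<le> s^n" by linarith
  define X where "X = s^n - 2*s*r^m"
  have X: "X + 2*s*r^m = s^n" using le X_def by simp
  have "int T * int r ^ n = int X * int r ^ Suc K" using eqi le X_def by (simp add: of_nat_diff)
  then have "T * r^n = X * r^Suc K" using of_nat_eq_iff by (metis of_nat_mult of_nat_power)
  then have "r^n * T = r^(Suc K) * X" by (simp add: mult.commute)
  moreover have "Lv A B r s (K+n) (r^n*T)" using Lv_lift[OF B0 KT(1)] by simp
  ultimately have "Lv A B r s (K+n) (r^(Suc K)*X)" by simp
  moreover have "K + n = m + Suc K" using m by simp
  ultimately have "Lv A B r s (m + Suc K) (r^(Suc K)*X)" by metis
  then have "Lv A B r s m X" using Lv_desc[OF cop r0 sA sB Aadd Badd Amul Bmul] by blast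
  moreover have "X + (2*s)*r^m = s^(Suc m)" using X m by simp
  moreover have "2*s \<ge> 1" using s0 by simp
  ultimately have "2*s \<le> s" using Lv_bound[OF cop r1 rle(1) Bf] by blast
  then show False using s0 by simp
qed

lemma hD': "D = {x \<in> M. \<exists>n\<ge>1. e n - x \<in> M}"
  unfolding hD e_def le_G_def by simp

lemma interval: "is_interval M D"
  unfolding is_interval_def
proof (intro conjI ballI allI impI)
  have "e 1 - 0 \<in> M" using e_in by simp
  then have "0 \<in> D" using hD' M0 by blast
  then show "D \<noteq> {}" by blast
  show "D \<subseteq> M" using hD' by blast
next
  fix x y assume x: "x \<in> D" and y: "y \<in> D"
  obtain n where n: "n \<ge> 1" "e n - x \<in> M" using x hD' by blast
  obtain m where m: "m \<ge> 1" "e m - y \<in> M" using y hD' by blast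
  define N where "N = max n m"
  have N: "N \<ge> 1" "n \<le> N" "m \<le> N" using n m N_def by auto
  have "e N \<in> D" using hD' e_in[OF N(1)] M0 N(1) by force
  moreover have "e N - x \<in> M"
  proof -
    have "e N - x = (e N - e n) + (e n - x)" by simp
    then show ?thesis using Madd mono[OF n(1) N(2)] n(2) by metis
  qed
  moreover have "e N - y \<in> M"
  proof -
    have "e N - y = (e N - e m) + (e m - y)" by simp
    then show ?thesis using Madd mono[OF m(1) N(3)] m(2) by metis
  qed
  ultimately show "\<exists>z\<in>D. le_G M x z \<and> le_G M y z" unfolding le_G_def by blast
next
  fix x y assume x: "x \<in> D" and h: "le_G M 0 y \<and> le_G M y x"
  obtain n where n: "n \<ge> 1" "e n - x \<in> M" using x hD' by blast
  have yM: "y \<in> M" using h unfolding le_G_def by simp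
  have "e n - y = (e n - x) + (x - y)" by simp
  then have "e n - y \<in> M" using Madd n(2) h unfolding le_G_def by metis
  then show "y \<in> D" using hD' yM n(1) by blast
qed

definition S :: "rat set" where "S = {x. \<exists>n\<ge>1. of_nat r * e n - x \<in> M}"

lemma S_down: "w \<in> S \<Longrightarrow> w - z \<in> M \<Longrightarrow> z \<in> S"
proof -
  assume w: "w \<in> S" and wz: "w - z \<in> M"
  then obtain n where n: "n \<ge> 1" "of_nat r * e n - w \<in> M" unfolding S_def by blast
  have "of_nat r * e n - z = (of_nat r * e n - w) + (w - z)" by simp
  then have "of_nat r * e n - z \<in> M" using Madd n(2) wz by metis
  then show "z \<in> S" unfolding S_def using n(1) by blast
qed

lemma S_add: "x \<in> S \<Longrightarrow> y \<in> S \<Longrightarrow> x + y \<in> S"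
proof -
  assume x: "x \<in> S" and y: "y \<in> S"
  obtain n where n: "n \<ge> 1" "of_nat r * e n - x \<in> M" using x S_def by blast
  obtain m where m: "m \<ge> 1" "of_nat r * e m - y \<in> M" using y S_def by blast
  define N where "N = max n m"
  have N: "N \<ge> 1" "n \<le> N" "m \<le> N" using n m N_def by auto
  have 1: "of_nat r * e N - x \<in> M"
  proof -
    have "of_nat r * e N - x = of_nat r * (e N - e n) + (of_nat r * e n - x)" by (simp add: algebra_simps)
    then show ?thesis using Madd Mmul mono[OF n(1) N(2)] n(2) by metis
  qed
  have 2: "of_nat r * e N - y \<in> M"
  proof -
    have "of_nat r * e N - y = of_nat r * (e N - e m) + (of_nat r * e m - y)" by (simp add: algebra_simps)
    then show ?thesis using Madd Mmul mono[OF m(1) N(3)] m(2) by metis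
  qed
  have "of_nat r * e (Suc N) - (x + y) = (of_nat r * e (Suc N) - 2 * (of_nat r * e N))
     + (of_nat r * e N - x) + (of_nat r * e N - y)" by (simp add: algebra_simps)
  then have "of_nat r * e (Suc N) - (x + y) \<in> M" using Madd 1 2 double[OF N(1)] by metis
  then show ?thesis unfolding S_def by (intro CollectI exI[of _ "Suc N"]) simp
qed

lemma S0: "0 \<in> S" unfolding S_def using ce[of 1 r] by auto

lemma S_ce: "n \<ge> 1 \<Longrightarrow> of_nat c * e n \<in> S"
proof (induction c)
  case 0 then show ?case using S0 by simp
next
  case (Suc c)
  have "e n \<in> S"
  proof -
    have "of_nat r * e n - e n = of_nat (r - 1) * e n" using r0 by (simp add: of_nat_diff algebra_simps)
    then show ?thesis unfolding S_def using ce[OF Suc.prems, of "r-1"] Suc.prems by auto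
  qed
  then show ?case using S_add Suc by (simp add: algebra_simps)
qed

lemma S_all: "x \<in> M \<Longrightarrow> x \<in> S"
proof -
  assume "x \<in> M"
  then have "x \<in> gen_monoid ({of_nat k / of_nat r | k. k \<in> A}
            \<union> {of_nat k' / of_nat r * (of_nat s / of_nat r) ^ n | k' n. k' \<in> B \<and> n \<ge> 1})" using hM by simp
  then show ?thesis
  proof (induction rule: gen_monoid.induct)
    case zero then show ?case using S0 .
  next
    case (add x y) then show ?case using S_add by blast
  next
    case (gen x)
    then show ?case
    proof
      assume "x \<in> {of_nat k / of_nat r | k. k \<in> A}"
      then obtain k where k: "k \<in> A" "x = of_nat k / of_nat r" by blast
      have "of_nat k * e 1 - x = of_nat (k*(s-1)) / of_nat r"
        using k(2) s0 by (simp add: e_def of_nat_diff diff_divide_distrib algebra_simps)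
      moreover have "(s-1)*k \<in> A" by (rule Amul[OF k(1)])
      then have "k*(s-1) \<in> A" by (simp add: mult.commute)
      ultimately have "of_nat k * e 1 - x \<in> M" using genA[of "k*(s-1)"] by (simp only:)
      then show ?case using S_down S_ce[of 1 k] by simp
    next
      assume "x \<in> {of_nat k' / of_nat r * (of_nat s / of_nat r) ^ n | k' n. k' \<in> B \<and> n \<ge> 1}"
      then obtain k n where kn: "k \<in> B" "n \<ge> 1" "x = of_nat k / of_nat r * e n" unfolding e_def by blast
      have "of_nat k * e n - x = of_nat (k*(r-1)) / of_nat r * e n"
        using kn(3) r0 by (simp add: of_nat_diff diff_divide_distrib algebra_simps)
      moreover have "(r-1)*k \<in> B" by (rule Bmul[OF kn(1)])
      then have "k*(r-1) \<in> B" by (simp add: mult.commute)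
      ultimately have "of_nat k * e n - x \<in> M" using genB[of "k*(r-1)"] kn(2) by (simp only:)
      then show ?case using S_down S_ce[OF kn(2), of k] by simp
    qed
  qed
qed

lemma imul_char: "t \<ge> 1 \<Longrightarrow> imul M t D = {z \<in> M. \<exists>n\<ge>1. of_nat t * e n - z \<in> M}"
proof (induction t rule: nat_induct_at_least)
  case base then show ?case using hD' by simp
next
  case (Suc t)
  then obtain t' where t': "t = Suc t'" by (cases t) auto
  have I: "imul M (Suc t) D = isum M D (imul M t D)" using t' by simp
  show ?case
  proof (intro set_eqI iffI)
    fix z assume "z \<in> imul M (Suc t) D"
    then obtain x y where z: "z \<in> M" "x \<in> D" "y \<in> imul M t D" "x + y - z \<in> M"
      using I unfolding isum_def le_G_def by blast
    obtain n where n: "n \<ge> 1" "e n - x \<in> M" using z(2) hD' by blast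
    obtain m where m: "m \<ge> 1" "of_nat t * e m - y \<in> M" using z(3) Suc.IH by blast
    define N where "N = max n m"
    have N: "N \<ge> 1" "n \<le> N" "m \<le> N" using n m N_def by auto
    have "of_nat (Suc t) * e N - z = (e N - e n) + (e n - x) + of_nat t * (e N - e m)
       + (of_nat t * e m - y) + (x + y - z)" by (simp add: algebra_simps)
    then have "of_nat (Suc t) * e N - z \<in> M"
      using Madd Mmul mono[OF n(1) N(2)] mono[OF m(1) N(3)] n(2) m(2) z(4) by metis
    then show "z \<in> {z \<in> M. \<exists>n\<ge>1. of_nat (Suc t) * e n - z \<in> M}" using z(1) N(1) by blast
  next
    fix z assume "z \<in> {z \<in> M. \<exists>n\<ge>1. of_nat (Suc t) * e n - z \<in> M}"
    then obtain n where z: "z \<in> M" "n \<ge> 1" "of_nat (Suc t) * e n - z \<in> M" by blast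
    have x: "e n \<in> D" using hD' e_in[OF z(2)] M0 z(2) by force
    have y: "of_nat t * e n \<in> imul M t D" using Suc.IH ce[OF z(2)] M0 z(2) by force
    have "e n + of_nat t * e n - z = of_nat (Suc t) * e n - z" by (simp add: algebra_simps)
    then have "e n + of_nat t * e n - z \<in> M" using z(3) by simp
    then show "z \<in> imul M (Suc t) D" using I x y z(1) unfolding isum_def le_G_def by blast
  qed
qed

lemma main: "is_interval M D \<and> D \<noteq> M \<and> imul M r D = M"
proof (intro conjI)
  show "is_interval M D" by (rule interval)
  have "2*s \<in> A" using Amul[OF sA] by simp
  then have "of_nat (2*s) / of_nat r \<in> M" by (rule genA)
  then show "D \<noteq> M" using notD by blast
  show "imul M r D = M" using imul_char[of r] r0 S_all unfolding S_def by auto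
qed

end

theorem lemma2p2:
  fixes p q r s :: nat and A B :: "nat set" and M D :: "rat set"
  assumes "0 < p" "0 < q" "1 < q" "q < p - q" "gcd p q = 1"
    and "A = gen_monoid {q, p - q}"
    and "s \<in> A" "s \<noteq> 0"
    and "0 < r" "1 < r" "r < s - r" "gcd r s = 1"
    and "B = gen_monoid {r, s - r}"
    and "M = gen_monoid ({of_nat k / of_nat r | k. k \<in> A}
            \<union> {of_nat k' / of_nat r * (of_nat s / of_nat r) ^ n | k' n. k' \<in> B \<and> n \<ge> 1})"
    and "D = {x \<in> M. \<exists>n\<ge>1. le_G M x ((of_nat s / of_nat r) ^ n)}"
  shows "is_interval M D \<and> D \<noteq> M \<and> imul M r D = M"
proof -
  interpret L22 p q r s A B M D using assms by unfold_locales
  show ?thesis by (rule main)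
qed

end
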